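(* Let $d\ge1$, $\alpha\ge1$, and $G\in\mathcal{C}^d_\alpha$ (with a fixed representing system of sets). Let $v$ be a maximal vertex of $G$, let $D_i$ be the set of vertices at distance $i$ from $v$ in $G$, and let $(\hat G,w)$ be the weighted graph obtained from $G$ by giving every edge of $G$ weight $1$ and adding, for every pair $x,y$ of vertices lying in a common $D_i$ such that $y$ contains $x$, an edge $xy$ of weight $2$. Then $\mathrm{dist}_G(x,y)=\mathrm{dist}_{(\hat G,w)}(x,y)$ for all $x,y\in V(G)$.
   Context: The height of a bounded convex set $X\subseteq\mathbb{R}^d$ is the infimum of $h\ge0$ such that $X$ lies between two parallel hyperplanes at distance $h$; its aspect ratio is its diameter divided by its height. $\mathcal{C}^d_\alpha$ is the class of connected intersection graphs of systems of path-connected sets in $\mathbb{R}^d$, each obtained from a compact convex set of aspect ratio at most $\alpha$ by removing some subset of its interior (vertices are identified with the sets; adjacent iff they intersect). For a vertex $x$, $\overline{x}$ denotes the convex hull of the set $x$. A vertex $y$ contains a different vertex $x$ if $\overline{x}\subseteq\overline{y}$; a vertex $x$ is maximal if no other vertex contains it. In a weighted graph, the length of a path is the sum of its edge weights and $\mathrm{dist}$ is the infimum of lengths of connecting paths. *)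

theory Defs
  imports "HOL-Analysis.Analysis"
begin

definition height :: "('a::euclidean_space) set \<Rightarrow> real" where
  "height X = Inf {h. h \<ge> 0 \<and> (\<exists>u b. norm u = 1 \<and> (\<forall>x\<in>X. b \<le> u \<bullet> x \<and> u \<bullet> x \<le> b + h))}"

text \<open>Aspect ratio diameter/height is at most alpha (written without division, so that
  degenerate sets of height 0 and positive diameter have infinite aspect ratio).\<close>
definition aspect_le :: "('a::euclidean_space) set \<Rightarrow> real \<Rightarrow> bool" where
  "aspect_le K \<alpha> \<longleftrightarrow> diameter K \<le> \<alpha> * height K"

definition admissible :: "real \<Rightarrow> ('a::euclidean_space) set \<Rightarrow> bool" where
  "admissible \<alpha> x \<longleftrightarrow> path_connected x \<and>
     (\<exists>K R. compact K \<and> convex K \<and> K \<noteq> {} \<and> aspect_le K \<alpha> \<and> R \<subseteq> interior K \<and> x = K - R)"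

text \<open>Weighted (multi)graphs as sets of directed weighted edges (x, y, weight); walks.\<close>
fun is_walk :: "('a \<times> 'a \<times> real) set \<Rightarrow> 'a \<Rightarrow> ('a \<times> 'a \<times> real) list \<Rightarrow> 'a \<Rightarrow> bool" where
  "is_walk W x [] y = (x = y)"
| "is_walk W x (e # es) y = (e \<in> W \<and> fst e = x \<and> is_walk W (fst (snd e)) es y)"

definition wdist :: "('a \<times> 'a \<times> real) set \<Rightarrow> 'a \<Rightarrow> 'a \<Rightarrow> real" where
  "wdist W x y = Inf {sum_list (map (\<lambda>e. snd (snd e)) es) | es. is_walk W x es y}"

definition igraph :: "'b set set \<Rightarrow> ('b set \<times> 'b set \<times> real) set" where
  "igraph V = {(x, y, 1) | x y. x \<in> V \<and> y \<in> V \<and> x \<noteq> y \<and> x \<inter> y \<noteq> {}}"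

definition graph_connected :: "('a \<times> 'a \<times> real) set \<Rightarrow> 'a set \<Rightarrow> bool" where
  "graph_connected W V \<longleftrightarrow> (\<forall>x\<in>V. \<forall>y\<in>V. \<exists>es. is_walk W x es y)"

text \<open>G in class C^d_alpha, vertices being the sets themselves.\<close>
definition in_class_C :: "real \<Rightarrow> ('a::euclidean_space) set set \<Rightarrow> bool" where
  "in_class_C \<alpha> V \<longleftrightarrow> finite V \<and> V \<noteq> {} \<and> (\<forall>x\<in>V. admissible \<alpha> x) \<and> graph_connected (igraph V) V"

definition vcontains :: "('a::euclidean_space) set \<Rightarrow> 'a set \<Rightarrow> bool" where
  "vcontains y x \<longleftrightarrow> x \<noteq> y \<and> convex hull x \<subseteq> convex hull y"

definition maximal_vertex :: "('a::euclidean_space) set set \<Rightarrow> 'a set \<Rightarrow> bool" where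
  "maximal_vertex V v \<longleftrightarrow> v \<in> V \<and> (\<forall>y\<in>V. \<not> vcontains y v)"

definition layer :: "('a::euclidean_space) set set \<Rightarrow> 'a set \<Rightarrow> nat \<Rightarrow> 'a set set" where
  "layer V v i = {x \<in> V. wdist (igraph V) v x = real i}"

definition hat_graph :: "('a::euclidean_space) set set \<Rightarrow> 'a set \<Rightarrow> ('a set \<times> 'a set \<times> real) set" where
  "hat_graph V v = igraph V \<union>
     {(a, b, 2) | a b x y. (\<exists>i. x \<in> layer V v i \<and> y \<in> layer V v i) \<and> vcontains y x \<and>
        ((a = x \<and> b = y) \<or> (a = y \<and> b = x))}"

end

theory Submission
  imports Defs
begin

lemma walk_append: "is_walk W a (es1 @ es2) b \<longleftrightarrow> (\<exists>c. is_walk W a es1 c \<and> is_walk W c es2 b)"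
  by (induction es1 arbitrary: a) auto

lemma igraph_len: "is_walk (igraph V) a es b \<Longrightarrow> sum_list (map (\<lambda>e. snd (snd e)) es) = real (length es)"
  by (induction es arbitrary: a) (auto simp: igraph_def)

lemma igraph_walk_V: "is_walk (igraph V) a es b \<Longrightarrow> a \<in> V \<Longrightarrow> b \<in> V"
  by (induction es arbitrary: a) (auto simp: igraph_def)

lemma hat_nonneg: "is_walk (hat_graph V v) a es b \<Longrightarrow> sum_list (map (\<lambda>e. snd (snd e)) es) \<ge> 0"
proof (induction es arbitrary: a)
  case Nil then show ?case by simp
next
  case (Cons e es)
  have "snd (snd e) \<ge> 0" using Cons.prems by (auto simp: hat_graph_def igraph_def)
  then show ?case using Cons by fastforce
qed

lemma wdist_G_le:
  assumes "is_walk (igraph V) a es b"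
  shows "wdist (igraph V) a b \<le> real (length es)"
  unfolding wdist_def
proof (rule cInf_lower)
  show "real (length es) \<in> {sum_list (map (\<lambda>e. snd (snd e)) es) |es. is_walk (igraph V) a es b}"
    using assms igraph_len by (metis (mono_tags, lifting) mem_Collect_eq)
  show "bdd_below {sum_list (map (\<lambda>e. snd (snd e)) es) |es. is_walk (igraph V) a es b}"
    by (rule bdd_belowI[of _ 0]) (auto simp: igraph_len)
qed

lemma wdist_G_attained:
  assumes "is_walk (igraph V) a es0 b"
  shows "\<exists>es. is_walk (igraph V) a es b \<and> wdist (igraph V) a b = real (length es)"
proof -
  define n where "n = (LEAST n. \<exists>es. is_walk (igraph V) a es b \<and> length es = n)"
  have ex: "\<exists>es. is_walk (igraph V) a es b \<and> length es = n"
    unfolding n_def by (rule LeastI[of _ "length es0"]) (use assms in auto)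
  then obtain es where es: "is_walk (igraph V) a es b" "length es = n" by blast
  have min: "n \<le> length es'" if "is_walk (igraph V) a es' b" for es'
    unfolding n_def by (rule Least_le) (use that in auto)
  have "wdist (igraph V) a b = real n"
    unfolding wdist_def
  proof (rule cInf_eq_minimum)
    show "real n \<in> {sum_list (map (\<lambda>e. snd (snd e)) es) |es. is_walk (igraph V) a es b}"
      using es igraph_len by (metis (mono_tags, lifting) mem_Collect_eq)
    fix x assume "x \<in> {sum_list (map (\<lambda>e. snd (snd e)) es) |es. is_walk (igraph V) a es b}"
    then obtain es' where w': "is_walk (igraph V) a es' b" and "x = sum_list (map (\<lambda>e. snd (snd e)) es')"
      by blast
    then have "x = real (length es')" using igraph_len by metis
    with w'
    show "real n \<le> x" using min by auto
  qed
  then show ?thesis using es by auto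
qed

lemma lemL:
  assumes "is_walk (igraph V) a es b" "a \<in> V" "\<forall>z\<in>V. connected z" "closed K"
    "b \<subseteq> K" "\<not> a \<subseteq> interior K"
  shows "\<exists>c es1 es2. c \<in> V \<and> is_walk (igraph V) a es1 c \<and> is_walk (igraph V) c es2 b
     \<and> length es1 + length es2 = length es \<and> c \<inter> frontier K \<noteq> {}"
  using assms
proof (induction es arbitrary: a)
  case Nil
  then have "a \<subseteq> K" by simp
  then have "a \<inter> frontier K \<noteq> {}" using Nil.prems(6) \<open>closed K\<close>
    by (auto simp: frontier_def closure_closed)
  then show ?case using Nil by (intro exI[of _ a] exI[of _ "[]"]) auto
next
  case (Cons e es)
  obtain a' where e: "e = (a, a', 1)" "a' \<in> V" "a \<inter> a' \<noteq> {}" and w: "is_walk (igraph V) a' es b"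
    using Cons.prems(1) unfolding igraph_def by force
  show ?case
  proof (cases "a' \<subseteq> interior K")
    case False
    from Cons.IH[OF w e(2) Cons.prems(3,4,5) False]
    obtain c es1 es2 where "c \<in> V" "is_walk (igraph V) a' es1 c" "is_walk (igraph V) c es2 b"
      "length es1 + length es2 = length es" "c \<inter> frontier K \<noteq> {}" by blast
    then show ?thesis using Cons.prems(1) e
      by (intro exI[of _ c] exI[of _ "e # es1"] exI[of _ es2]) auto
  next
    case True
    have "a \<inter> frontier (interior K) \<noteq> {}"
      by (rule connected_Int_frontier) (use Cons.prems True e in auto)
    then have "a \<inter> frontier K \<noteq> {}" using frontier_interior_subset by blast
    then show ?thesis using Cons.prems
      by (intro exI[of _ a] exI[of _ "[]"] exI[of _ "e # es"]) auto
  qed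
qed

lemma key:
  fixes V :: "(real ^ 'd) set set"
  assumes C: "in_class_C \<alpha> V" and M: "maximal_vertex V v"
    and x: "x \<in> layer V v i" and y: "y \<in> layer V v i" and yx: "vcontains y x"
  shows "x \<inter> y \<noteq> {} \<or> (\<exists>c\<in>V. c \<noteq> x \<and> c \<noteq> y \<and> c \<inter> x \<noteq> {} \<and> c \<inter> y \<noteq> {})"
proof -
  have vV: "v \<in> V" using M by (simp add: maximal_vertex_def)
  have xV: "x \<in> V" and dx: "wdist (igraph V) v x = real i" using x by (auto simp: layer_def)
  have yV: "y \<in> V" and dy: "wdist (igraph V) v y = real i" using y by (auto simp: layer_def)
  have conn: "\<forall>z\<in>V. connected z" using C
    by (auto simp: in_class_C_def admissible_def path_connected_imp_connected)
  have xy: "x \<noteq> y" and hxy: "convex hull x \<subseteq> convex hull y" using yx by (auto simp: vcontains_def)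
  obtain es0 where "is_walk (igraph V) v es0 x" using C vV xV unfolding in_class_C_def graph_connected_def by blast
  then obtain es where es: "is_walk (igraph V) v es x" "length es = i"
    using wdist_G_attained dx by fastforce
  obtain K R where K: "compact K" "convex K" "R \<subseteq> interior K" "y = K - R"
    using C yV unfolding in_class_C_def admissible_def by blast
  have frK: "frontier K \<subseteq> y" using K interior_subset
    by (auto simp: frontier_def closure_closed compact_imp_closed)
  have hyK: "convex hull y \<subseteq> K" proof -
    have "y \<subseteq> K" using K(4) by blast
    then show ?thesis using K(2) by (rule hull_minimal)
  qed
  have xK: "x \<subseteq> K" using hull_subset[of x convex] hxy hyK by (rule subset_trans[OF subset_trans])
  have intK: "interior K \<subseteq> convex hull y"
  proof -
    have "K = convex hull (frontier K)" using Krein_Milman_frontier K by blast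
    also have "\<dots> \<subseteq> convex hull y" using frK by (simp add: hull_mono)
    finally show ?thesis using interior_subset by blast
  qed
  have vy: "v \<noteq> y"
  proof
    assume "v = y"
    then have "wdist (igraph V) v y \<le> 0" using wdist_G_le[of V v "[]" v] by simp
    then have "i = 0" using dy by simp
    then have "x = v" using es by simp
    then show False using \<open>v = y\<close> xy by simp
  qed
  have "\<not> v \<subseteq> interior K"
  proof
    assume "v \<subseteq> interior K"
    have "convex hull v \<subseteq> convex hull y"
      by (rule hull_minimal[of v "convex hull y" convex, OF subset_trans[OF \<open>v \<subseteq> interior K\<close> intK] convex_convex_hull[of y]])
    then have "vcontains y v" using vy by (simp add: vcontains_def)
    then show False using M yV by (auto simp: maximal_vertex_def)
  qed
  from lemL[OF es(1) vV conn compact_imp_closed[OF K(1)] xK this]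
  obtain c es1 es2 where c: "c \<in> V" "is_walk (igraph V) v es1 c" "is_walk (igraph V) c es2 x"
    "length es1 + length es2 = length es" "c \<inter> frontier K \<noteq> {}" by blast
  have cy: "c \<inter> y \<noteq> {}" using c(5) frK by blast
  have "c \<noteq> y"
  proof
    assume "c = y"
    then have "real i \<le> real (length es1)" using wdist_G_le[OF c(2)] dy by simp
    then have "length es2 = 0" using c(4) es(2) by linarith
    then have "es2 = []" by simp
    then show False using c(3) \<open>c = y\<close> xy by simp
  qed
  then have "is_walk (igraph V) v (es1 @ [(c, y, 1)]) y"
    using c walk_append[of "igraph V" v es1 "[(c,y,1)]" y] cy yV by (auto simp: igraph_def)
  from wdist_G_le[OF this] dy have "length es2 \<le> 1" using c(4) es(2) by simp
  then consider "es2 = []" | e where "es2 = [e]" by (cases es2) auto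
  then show ?thesis
  proof cases
    case 1
    then show ?thesis using c(3) cy by auto
  next
    case (2 e)
    then have ce: "c \<noteq> x" "c \<inter> x \<noteq> {}" using c(3) by (auto simp: igraph_def)
    then show ?thesis using c(1) cy \<open>c \<noteq> y\<close> by blast
  qed
qed

lemma hat_to_G:
  fixes V :: "(real ^ 'd) set set"
  assumes C: "in_class_C \<alpha> V" and M: "maximal_vertex V v"
  shows "is_walk (hat_graph V v) a es b \<Longrightarrow> \<exists>es'. is_walk (igraph V) a es' b \<and>
     real (length es') \<le> sum_list (map (\<lambda>e. snd (snd e)) es)"
proof (induction es arbitrary: a)
  case Nil then show ?case by (intro exI[of _ "[]"]) auto
next
  case (Cons e es)
  obtain a' w where e: "e = (a, a', w)" "e \<in> hat_graph V v" and rest: "is_walk (hat_graph V v) a' es b"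
    using Cons.prems by (cases e) auto
  obtain es' where es': "is_walk (igraph V) a' es' b"
    "real (length es') \<le> sum_list (map (\<lambda>e. snd (snd e)) es)" using Cons.IH[OF rest] by blast
  have "\<exists>p. is_walk (igraph V) a p a' \<and> real (length p) \<le> w"
  proof (cases "e \<in> igraph V")
    case True
    then show ?thesis using e by (intro exI[of _ "[e]"]) (auto simp: igraph_def)
  next
    case False
    then obtain x y i where w2: "w = 2" and xy: "x \<in> layer V v i" "y \<in> layer V v i" "vcontains y x"
      and ab: "(a = x \<and> a' = y) \<or> (a = y \<and> a' = x)"
      using e unfolding hat_graph_def by auto
    have V: "x \<in> V" "y \<in> V" using xy by (auto simp: layer_def)
    have ne: "x \<noteq> y" using xy by (auto simp: vcontains_def)
    from key[OF C M xy]
    show ?thesis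
    proof
      assume "x \<inter> y \<noteq> {}"
      then show ?thesis using ab V ne w2
        by (intro exI[of _ "[(a, a', 1)]"]) (auto simp: igraph_def)
    next
      assume "\<exists>c\<in>V. c \<noteq> x \<and> c \<noteq> y \<and> c \<inter> x \<noteq> {} \<and> c \<inter> y \<noteq> {}"
      then obtain c where "c \<in> V" "c \<noteq> x" "c \<noteq> y" "c \<inter> x \<noteq> {}" "c \<inter> y \<noteq> {}" by blast
      then show ?thesis using ab V ne w2
        by (intro exI[of _ "[(a, c, 1), (c, a', 1)]"]) (auto simp: igraph_def)
    qed
  qed
  then obtain p where p: "is_walk (igraph V) a p a'" "real (length p) \<le> w" by blast
  show ?case
    using p es' e walk_append[of "igraph V" a p es' b]
    by (intro exI[of _ "p @ es'"]) auto
qed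

theorem lemma5p3:
  fixes V :: "(real ^ 'd) set set" and v :: "(real ^ 'd) set" and \<alpha> :: real
  assumes "\<alpha> \<ge> 1"
    and "in_class_C \<alpha> V"
    and "maximal_vertex V v"
  shows "\<forall>x\<in>V. \<forall>y\<in>V. wdist (igraph V) x y = wdist (hat_graph V v) x y"
proof (intro ballI)
  fix x y assume xV: "x \<in> V" and yV: "y \<in> V"
  define SG where "SG = {sum_list (map (\<lambda>e. snd (snd e)) es) |es. is_walk (igraph V) x es y}"
  define SH where "SH = {sum_list (map (\<lambda>e. snd (snd e)) es) |es. is_walk (hat_graph V v) x es y}"
  have sub: "igraph V \<subseteq> hat_graph V v" by (auto simp: hat_graph_def)
  have mono: "is_walk (igraph V) a es b \<Longrightarrow> is_walk (hat_graph V v) a es b" for a es b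
    by (induction es arbitrary: a) (use sub in auto)
  have SGsub: "SG \<subseteq> SH" unfolding SG_def SH_def using mono by blast
  obtain es0 where "is_walk (igraph V) x es0 y" using assms(2) xV yV
    unfolding in_class_C_def graph_connected_def by blast
  then have SGne: "SG \<noteq> {}" unfolding SG_def by blast
  have bG: "bdd_below SG" unfolding SG_def by (rule bdd_belowI[of _ 0]) (auto simp: igraph_len)
  have bH: "bdd_below SH" unfolding SH_def by (rule bdd_belowI[of _ 0]) (auto dest: hat_nonneg)
  have "Inf SH \<le> Inf SG" by (rule cInf_superset_mono[OF SGne bH SGsub])
  moreover have "Inf SG \<le> Inf SH"
  proof (rule cInf_greatest)
    show "SH \<noteq> {}" using SGne SGsub by blast
    fix s assume "s \<in> SH"
    then obtain es where es: "is_walk (hat_graph V v) x es y" "s = sum_list (map (\<lambda>e. snd (snd e)) es)"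
      unfolding SH_def by blast
    obtain es' where "is_walk (igraph V) x es' y" "real (length es') \<le> s"
      using hat_to_G[OF assms(2,3) es(1)] es(2) by blast
    moreover then have "real (length es') \<in> SG" unfolding SG_def using igraph_len
      by (metis (mono_tags, lifting) mem_Collect_eq)
    ultimately show "Inf SG \<le> s" using cInf_lower[OF _ bG] by (meson order_trans)
  qed
  ultimately show "wdist (igraph V) x y = wdist (hat_graph V v) x y"
    unfolding wdist_def SG_def SH_def by simp
qed

end
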